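(* Let $n\geq 2$ and let $(\mu_0^n,\cdot,[-,-])$ be a Poisson algebra structure on the associative algebra $\mu_0^n$. Then it is a trivial Poisson algebra; namely $[e_i,e_j]=0$ for all $1\leq i,j\leq n$.
   Context: $\mu_0^n$ is the complex commutative associative algebra with basis $\{e_1,\dots,e_n\}$ and $e_i\cdot e_j=e_{i+j}$ for $2\leq i+j\leq n$, other products zero. A Poisson algebra is a triple $(\mathfrak{L},\cdot,[-,-])$ with $(\mathfrak{L},\cdot)$ commutative associative, $(\mathfrak{L},[-,-])$ a Lie algebra, and $[x,y\cdot z]=[x,y]\cdot z+y\cdot[x,z]$ for all $x,y,z$. It is trivial if $\mathfrak{L}\cdot\mathfrak{L}=0$ or $[\mathfrak{L},\mathfrak{L}]=0$. *)

theory Defs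
  imports Main "HOL-Analysis.Analysis"
begin

text \<open>The algebra mu_0^n over the complex numbers, realised concretely: an element is its
coordinate vector x :: nat => complex with respect to the basis e_1,...,e_n, i.e. a function
supported in {1..n}.\<close>

definition mu_carrier :: "nat \<Rightarrow> (nat \<Rightarrow> complex) set" where
  "mu_carrier n = {x. \<forall>k. (k < 1 \<or> n < k) \<longrightarrow> x k = 0}"

definition mu_e :: "nat \<Rightarrow> nat \<Rightarrow> complex" where
  "mu_e i = (\<lambda>k. if k = i then 1 else 0)"

text \<open>The associative product: bilinear extension of e_i e_j = e_(i+j) if i+j <= n, else 0.\<close>
definition mu_mult :: "nat \<Rightarrow> (nat \<Rightarrow> complex) \<Rightarrow> (nat \<Rightarrow> complex) \<Rightarrow> (nat \<Rightarrow> complex)" where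
  "mu_mult n x y = (\<lambda>k. if 1 \<le> k \<and> k \<le> n then
      (\<Sum>i\<in>{1..n}. \<Sum>j\<in>{1..n}. if i + j = k then x i * y j else 0) else 0)"

definition poisson_bracket_mu :: "nat \<Rightarrow> ((nat \<Rightarrow> complex) \<Rightarrow> (nat \<Rightarrow> complex) \<Rightarrow> (nat \<Rightarrow> complex)) \<Rightarrow> bool" where
  "poisson_bracket_mu n br \<longleftrightarrow>
     (\<forall>x\<in>mu_carrier n. \<forall>y\<in>mu_carrier n. br x y \<in> mu_carrier n) \<and>
     (\<forall>x\<in>mu_carrier n. \<forall>y\<in>mu_carrier n. \<forall>z\<in>mu_carrier n.
        br (\<lambda>k. x k + y k) z = (\<lambda>k. br x z k + br y z k) \<and>
        br z (\<lambda>k. x k + y k) = (\<lambda>k. br z x k + br z y k)) \<and>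
     (\<forall>c::complex. \<forall>x\<in>mu_carrier n. \<forall>y\<in>mu_carrier n.
        br (\<lambda>k. c * x k) y = (\<lambda>k. c * br x y k) \<and> br x (\<lambda>k. c * y k) = (\<lambda>k. c * br x y k)) \<and>
     (\<forall>x\<in>mu_carrier n. br x x = (\<lambda>k. 0)) \<and>
     (\<forall>x\<in>mu_carrier n. \<forall>y\<in>mu_carrier n. \<forall>z\<in>mu_carrier n.
        (\<lambda>k. br x (br y z) k + br y (br z x) k + br z (br x y) k) = (\<lambda>k. 0)) \<and>
     (\<forall>x\<in>mu_carrier n. \<forall>y\<in>mu_carrier n. \<forall>z\<in>mu_carrier n.
        br x (mu_mult n y z) = (\<lambda>k. mu_mult n (br x y) z k + mu_mult n y (br x z) k))"

end

theory Submission
  imports Defs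
begin

lemma e_in: "1 \<le> i \<Longrightarrow> i \<le> n \<Longrightarrow> mu_e i \<in> mu_carrier n"
  by (auto simp: mu_e_def mu_carrier_def)

lemma mult_e1: assumes "1 \<le> j" "j + 1 \<le> n"
  shows "mu_mult n (mu_e 1) (mu_e j) = mu_e (Suc j)"
proof
  fix k
  have "(\<Sum>i\<in>{1..n}. \<Sum>j'\<in>{1..n}. if i + j' = k then mu_e 1 i * mu_e j j' else 0)
      = (\<Sum>i\<in>{1..n}. if i = 1 then (if 1 + j = k then 1 else 0) else 0)"
  proof (rule sum.cong[OF refl])
    fix i assume "i \<in> {1..n}"
    show "(\<Sum>j'\<in>{1..n}. if i + j' = k then mu_e 1 i * mu_e j j' else 0)
        = (if i = 1 then (if 1 + j = k then 1 else 0) else 0)"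
    proof -
      have "(\<Sum>j'\<in>{1..n}. if i + j' = k then mu_e 1 i * mu_e j j' else 0)
          = (\<Sum>j'\<in>{1..n}. if j' = j then (if i = 1 \<and> 1 + j = k then 1 else 0) else 0)"
        by (rule sum.cong) (auto simp: mu_e_def)
      also have "\<dots> = (if i = 1 then (if 1 + j = k then 1 else 0) else 0)"
        using assms by (simp add: sum.delta)
      finally show ?thesis .
    qed
  qed
  also have "\<dots> = (if 1 + j = k then 1 else 0)" using assms by simp
  finally have S: "(\<Sum>i\<in>{1..n}. \<Sum>j'\<in>{1..n}. if i + j' = k then mu_e 1 i * mu_e j j' else 0)
      = (if 1 + j = k then 1 else 0)" .
  show "mu_mult n (mu_e 1) (mu_e j) k = mu_e (Suc j) k"
    unfolding mu_mult_def S using assms by (auto simp: mu_e_def)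
qed

lemma mult_zero1: "mu_mult n (\<lambda>k. 0) y = (\<lambda>k. 0)" unfolding mu_mult_def by (rule ext) (simp only: mult_zero_left mult_zero_right if_cancel sum.neutral_const)
lemma mult_zero2: "mu_mult n y (\<lambda>k. 0) = (\<lambda>k. 0)" unfolding mu_mult_def by (rule ext) (simp only: mult_zero_left mult_zero_right if_cancel sum.neutral_const)

lemma antisym_br:
  assumes P: "poisson_bracket_mu n br" and x: "x \<in> mu_carrier n" and y: "y \<in> mu_carrier n"
  shows "br y x k = - br x y k"
proof -
  have s: "(\<lambda>k. x k + y k) \<in> mu_carrier n" using x y by (auto simp: mu_carrier_def)
  have "br (\<lambda>k. x k + y k) (\<lambda>k. x k + y k) = (\<lambda>k. 0)" using P s by (auto simp: poisson_bracket_mu_def)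
  moreover have "br (\<lambda>k. x k + y k) (\<lambda>k. x k + y k) = (\<lambda>k. br x (\<lambda>k. x k + y k) k + br y (\<lambda>k. x k + y k) k)"
    using P x y s by (simp add: poisson_bracket_mu_def)
  moreover have "br x (\<lambda>k. x k + y k) = (\<lambda>k. br x x k + br x y k)"
    using P x y by (simp add: poisson_bracket_mu_def)
  moreover have "br y (\<lambda>k. x k + y k) = (\<lambda>k. br y x k + br y y k)"
    using P x y by (simp add: poisson_bracket_mu_def)
  moreover have "br x x = (\<lambda>k. 0)" "br y y = (\<lambda>k. 0)" using P x y by (auto simp: poisson_bracket_mu_def)
  ultimately have "(\<lambda>k. br x y k + br y x k) = (\<lambda>k. 0)" by (metis add_0 add_0_right)
  hence "br x y k + br y x k = 0" by meson
  thus ?thesis by (simp add: eq_neg_iff_add_eq_0 add.commute)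
qed

lemma vanish:
  assumes P: "poisson_bracket_mu n br" and x: "x \<in> mu_carrier n"
    and h1: "br x (mu_e 1) = (\<lambda>k. 0)"
  shows "1 \<le> j \<Longrightarrow> j \<le> n \<Longrightarrow> br x (mu_e j) = (\<lambda>k. 0)"
proof (induction j)
  case 0 then show ?case by simp
next
  case (Suc j)
  show ?case
  proof (cases "j = 0")
    case True then show ?thesis using h1 by simp
  next
    case False
    hence j: "1 \<le> j" "j + 1 \<le> n" using Suc by auto
    have IH: "br x (mu_e j) = (\<lambda>k. 0)" using Suc j by auto
    have "br x (mu_e (Suc j)) = br x (mu_mult n (mu_e 1) (mu_e j))" using mult_e1[OF j] by simp
    also have "\<dots> = (\<lambda>k. mu_mult n (br x (mu_e 1)) (mu_e j) k + mu_mult n (mu_e 1) (br x (mu_e j)) k)"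
      using P x e_in[of 1 n] e_in[of j n] j by (simp add: poisson_bracket_mu_def)
    also have "\<dots> = (\<lambda>k. 0)" using h1 IH by (simp add: mult_zero1 mult_zero2)
    finally show ?thesis .
  qed
qed

theorem mainTheorem5:
  fixes n :: nat and br :: "(nat \<Rightarrow> complex) \<Rightarrow> (nat \<Rightarrow> complex) \<Rightarrow> (nat \<Rightarrow> complex)"
  assumes "n \<ge> 2" and "poisson_bracket_mu n br"
  shows "\<forall>i\<in>{1..n}. \<forall>j\<in>{1..n}. br (mu_e i) (mu_e j) = (\<lambda>k. 0)"
proof (intro ballI)
  fix i j assume i: "i \<in> {1..n}" and j: "j \<in> {1..n}"
  have e1: "mu_e 1 \<in> mu_carrier n" using assms(1) by (intro e_in) auto
  have ei: "mu_e i \<in> mu_carrier n" using i by (intro e_in) auto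
  have "br (mu_e 1) (mu_e 1) = (\<lambda>k. 0)" using assms(2) e1 by (auto simp: poisson_bracket_mu_def)
  hence a: "br (mu_e 1) (mu_e i) = (\<lambda>k. 0)" using vanish[OF assms(2) e1] i by auto
  have "br (mu_e i) (mu_e 1) = (\<lambda>k. 0)"
  proof
    fix k show "br (mu_e i) (mu_e 1) k = 0"
      using antisym_br[OF assms(2) e1 ei, of k] a by simp
  qed
  thus "br (mu_e i) (mu_e j) = (\<lambda>k. 0)" using vanish[OF assms(2) ei] j by auto
qed

end
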